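(* For a nonnegative integer $d$ let $P_d(x)=\sum_{i=0}^{d}\frac{(x_i)^2(x_{d-i})^2}{i!\,(d-i)!}$, where $x_i=x(x-1)\cdots(x-i+1)$, and let $R_d(x)$ be the remainder upon dividing $P_{d+1}(x)$ by $P_d(x)$, i.e. $R_d(x)=P_{d+1}(x)-\left(\frac{2}{d+1}x^2-\frac{2d}{d+1}x+\frac d2\right)P_d(x)$. Then for every integer $d\ge5$ and every real $x>d/2$, $$-0.5<\frac{R_d(x)}{P_d(x)}<0.$$ *)

theory Defs
  imports Complex_Main
begin

definition ffact :: "real \<Rightarrow> nat \<Rightarrow> real" where
  "ffact x i = (\<Prod>j<i. x - real j)"

definition P :: "nat \<Rightarrow> real \<Rightarrow> real" where
  "P d x = (\<Sum>i=0..d. (ffact x i)^2 * (ffact x (d - i))^2 / (fact i * fact (d - i)))"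

definition R :: "nat \<Rightarrow> real \<Rightarrow> real" where
  "R d x = P (Suc d) x
     - (2 / (real d + 1) * x^2 - 2 * real d / (real d + 1) * x + real d / 2) * P d x"

end

theory Submission
  imports Defs
begin

definition bt :: "real \<Rightarrow> nat \<Rightarrow> nat \<Rightarrow> real" where
  "bt x n i = (ffact x i)^2 * (ffact x (n - i))^2 / (fact i * fact (n - i))"

lemma P_bt: "P n x = (\<Sum>i=0..n. bt x n i)"
  by (simp add: P_def bt_def)

lemma ffact_Suc: "ffact x (Suc n) = ffact x n * (x - real n)"
  by (simp add: ffact_def)

lemma bt_nonneg: "bt x n i \<ge> 0"
  by (simp add: bt_def)

lemma ffact_pos: "real k < x + 1 \<Longrightarrow> ffact x k > 0"
  unfolding ffact_def by (rule prod_pos) auto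

lemma sumI:
  "(\<Sum>i=0..Suc m. bt x (Suc m) i * real i * \<phi> i)
   = (\<Sum>j=0..m. bt x m j * (x - real j)^2 * \<phi> (Suc j))"
proof -
  have "(\<Sum>i=0..Suc m. bt x (Suc m) i * real i * \<phi> i)
      = (\<Sum>j=0..m. bt x (Suc m) (Suc j) * real (Suc j) * \<phi> (Suc j))"
    by (subst sum.atLeast0_atMost_Suc_shift) simp
  also have "\<dots> = (\<Sum>j=0..m. bt x m j * (x - real j)^2 * \<phi> (Suc j))"
  proof (rule sum.cong)
    fix j assume "j \<in> {0..m}"
    then have "Suc m - Suc j = m - j" by simp
    then show "bt x (Suc m) (Suc j) * real (Suc j) * \<phi> (Suc j) = bt x m j * (x - real j)^2 * \<phi> (Suc j)"
    proof -
      have f: "fact (Suc j) = real (Suc j) * (fact j :: real)" by simp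
      have "bt x (Suc m) (Suc j) * real (Suc j) = (ffact x j)^2 * (x - real j)^2 * (ffact x (m - j))^2 / (fact j * fact (m - j))"
        unfolding bt_def ffact_Suc f \<open>Suc m - Suc j = m - j\<close> power_mult_distrib
        by (simp del: of_nat_Suc fact_Suc)
      then show ?thesis unfolding bt_def by (simp add: algebra_simps)
    qed
  qed simp
  finally show ?thesis .
qed

lemma sumII:
  "(\<Sum>i=0..Suc m. bt x (Suc m) i * real (Suc m - i) * \<phi> i)
   = (\<Sum>j=0..m. bt x m j * (x - real (m - j))^2 * \<phi> j)"
proof -
  have "(\<Sum>i=0..Suc m. bt x (Suc m) i * real (Suc m - i) * \<phi> i)
      = (\<Sum>j=0..m. bt x (Suc m) j * real (Suc m - j) * \<phi> j)"
    by (subst sum.atLeast0_atMost_Suc) simp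
  also have "\<dots> = (\<Sum>j=0..m. bt x m j * (x - real (m - j))^2 * \<phi> j)"
  proof (rule sum.cong)
    fix j assume "j \<in> {0..m}"
    then have e: "Suc m - j = Suc (m - j)" by simp
    show "bt x (Suc m) j * real (Suc m - j) * \<phi> j = bt x m j * (x - real (m - j))^2 * \<phi> j"
    proof -
      have f: "fact (Suc (m-j)) = real (Suc (m-j)) * (fact (m-j) :: real)" by simp
      have "bt x (Suc m) j * real (Suc m - j) = (ffact x j)^2 * (ffact x (m - j))^2 * (x - real (m-j))^2 / (fact j * fact (m - j))"
        unfolding bt_def ffact_Suc f e power_mult_distrib
        by (simp del: of_nat_Suc fact_Suc)
      then show ?thesis unfolding bt_def by (simp add: algebra_simps)
    qed
  qed simp
  finally show ?thesis .
qed


lemma sum_one: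
  "(real m + 1) * (\<Sum>i=0..Suc m. bt x (Suc m) i)
   = (\<Sum>j=0..m. bt x m j * ((x - real j)^2 + (x - real (m - j))^2))"
proof -
  have "(real m + 1) * (\<Sum>i=0..Suc m. bt x (Suc m) i)
      = (\<Sum>i=0..Suc m. bt x (Suc m) i * real i * 1) + (\<Sum>i=0..Suc m. bt x (Suc m) i * real (Suc m - i) * 1)"
    by (simp add: sum_distrib_left sum.distrib[symmetric] algebra_simps of_nat_diff)
  also have "\<dots> = (\<Sum>j=0..m. bt x m j * ((x - real j)^2 + (x - real (m - j))^2))"
    unfolding sumI sumII by (simp add: sum.distrib[symmetric] algebra_simps)
  finally show ?thesis .
qed

lemma key_sum:
  "(\<Sum>i=0..Suc m. bt x (Suc m) i * ((2 * real i - real (Suc m))^2 - real (Suc m)))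
   = - (2 * x - real m) * (\<Sum>j=0..m. bt x m j * (real m - 2 * real j)^2)"
proof -
  let ?psi = "\<lambda>i. real (Suc m) - 2 * real i"
  have "(\<Sum>i=0..Suc m. bt x (Suc m) i * ((2 * real i - real (Suc m))^2 - real (Suc m)))
      = (\<Sum>i=0..Suc m. bt x (Suc m) i * real (Suc m - i) * ?psi i)
        - (\<Sum>i=0..Suc m. bt x (Suc m) i * real i * ?psi i)
        - (real m + 1) * (\<Sum>i=0..Suc m. bt x (Suc m) i)"
    by (simp add: sum_distrib_left sum_subtractf[symmetric] algebra_simps of_nat_diff power2_eq_square)
  also have "\<dots> = (\<Sum>j=0..m. bt x m j * (x - real (m - j))^2 * ?psi j)
        - (\<Sum>j=0..m. bt x m j * (x - real j)^2 * ?psi (Suc j))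
        - (\<Sum>j=0..m. bt x m j * ((x - real j)^2 + (x - real (m - j))^2))"
    unfolding sumI sumII sum_one ..
  also have "\<dots> = (\<Sum>j=0..m. - (2 * x - real m) * (bt x m j * (real m - 2 * real j)^2))"
    unfolding sum_subtractf[symmetric]
  proof (rule sum.cong)
    fix j assume "j \<in> {0..m}"
    then have "real (m - j) = real m - real j" by (simp add: of_nat_diff)
    then show "bt x m j * (x - real (m - j))\<^sup>2 * ?psi j - bt x m j * (x - real j)\<^sup>2 * ?psi (Suc j) -
         bt x m j * ((x - real j)\<^sup>2 + (x - real (m - j))\<^sup>2) =
         - (2 * x - real m) * (bt x m j * (real m - 2 * real j)\<^sup>2)"
      by (simp add: algebra_simps power2_eq_square)
  qed simp
  also have "\<dots> = - (2 * x - real m) * (\<Sum>j=0..m. bt x m j * (real m - 2 * real j)^2)"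
    by (simp add: sum_distrib_left)
  finally show ?thesis .
qed

theorem lemma1p5:
  fixes d :: nat and x :: real
  assumes "d \<ge> 5" and "x > real d / 2"
  shows "-0.5 < R d x / P d x \<and> R d x / P d x < 0"
proof -
  obtain m where dm: "d = Suc m" using assms(1) by (cases d) auto
  define i0 where "i0 = d div 2"
  have i0d: "i0 \<in> {0..d}" unfolding i0_def by simp
  have "ffact x i0 > 0" by (rule ffact_pos) (use assms(2) in \<open>simp add: i0_def\<close>)
  moreover have "ffact x (d - i0) > 0"
  proof (rule ffact_pos)
    have "2 * (d - i0) \<le> d + 1" unfolding i0_def by presburger
    then have "real (2 * (d - i0)) \<le> real (d + 1)" by (simp only: of_nat_le_iff)
    then have "2 * real (d - i0) \<le> real d + 1" by simp
    then show "real (d - i0) < x + 1" using assms(2) by linarith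
  qed
  ultimately have bi0: "bt x d i0 > 0" unfolding bt_def by simp
  have Ppos: "P d x > 0"
  proof -
    have "bt x d i0 \<le> (\<Sum>i=0..d. bt x d i)"
      by (rule member_le_sum) (use i0d bt_nonneg in auto)
    then show ?thesis using bi0 P_bt by simp
  qed
  have S1: "(real d + 1) * P (Suc d) x = (\<Sum>i=0..d. bt x d i * ((x - real i)^2 + (x - real (d - i))^2))"
    unfolding P_bt by (rule sum_one)
  have S2: "(real d + 1) * R d x = (\<Sum>i=0..d. bt x d i * (((2 * real i - real d)^2 - real d) / 2))"
  proof -
    have "(real d + 1) * R d x = (real d + 1) * P (Suc d) x
          - (2 * x^2 - 2 * real d * x + real d * (real d + 1) / 2) * P d x"
    proof -
      have q: "(real d + 1) * (2 / (real d + 1) * x^2 - 2 * real d / (real d + 1) * x + real d / 2)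
          = 2 * x^2 - 2 * real d * x + real d * (real d + 1) / 2"
      proof -
        have h: "real d + 1 \<noteq> 0" by (simp add: add_nonneg_eq_0_iff)
        have "(real d + 1) * (2 / (real d + 1) * x^2) = 2 * x^2" using h by simp
        moreover have "(real d + 1) * (2 * real d / (real d + 1) * x) = 2 * real d * x" using h by simp
        ultimately show ?thesis by (simp add: algebra_simps)
      qed
      show ?thesis unfolding R_def right_diff_distrib q[symmetric] by (simp add: mult.assoc)
    qed
    also have "\<dots> = (\<Sum>i=0..d. bt x d i * ((x - real i)^2 + (x - real (d - i))^2)
          - bt x d i * (2 * x^2 - 2 * real d * x + real d * (real d + 1) / 2))"
    proof -
      have "(2 * x^2 - 2 * real d * x + real d * (real d + 1) / 2) * P d x
          = (\<Sum>i=0..d. bt x d i * (2 * x^2 - 2 * real d * x + real d * (real d + 1) / 2))"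
        unfolding P_bt sum_distrib_left by (rule sum.cong) simp_all
      then show ?thesis unfolding S1 by (simp only: sum_subtractf)
    qed
    also have "\<dots> = (\<Sum>i=0..d. bt x d i * (((2 * real i - real d)^2 - real d) / 2))"
    proof (rule sum.cong)
      fix i assume "i \<in> {0..d}"
      then have "real (d - i) = real d - real i" by (simp add: of_nat_diff)
      then show "bt x d i * ((x - real i)^2 + (x - real (d - i))^2)
          - bt x d i * (2 * x^2 - 2 * real d * x + real d * (real d + 1) / 2)
          = bt x d i * (((2 * real i - real d)^2 - real d) / 2)"
        by (simp add: algebra_simps power2_eq_square)
    qed simp
    finally show ?thesis .
  qed
  have low: "R d x > - P d x / 2"
  proof -
    have "(\<Sum>i=0..d. bt x d i * (((2 * real i - real d)^2 - real d) / 2))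
        \<ge> (\<Sum>i=0..d. bt x d i * (- (real d + 1) / 2) + bt x d i / 2)"
    proof (rule sum_mono)
      fix i assume "i \<in> {0..d}"
      have "bt x d i * (((2 * real i - real d)^2 - real d) / 2) - (bt x d i * (- (real d + 1) / 2) + bt x d i / 2)
          = bt x d i * (2 * real i - real d)^2 / 2" by (simp add: field_simps)
      also have "\<dots> \<ge> 0" using bt_nonneg[of x d i] by simp
      finally show "bt x d i * (- (real d + 1) / 2) + bt x d i / 2 \<le> bt x d i * (((2 * real i - real d)^2 - real d) / 2)"
        by simp
    qed
    also have "(\<Sum>i=0..d. bt x d i * (- (real d + 1) / 2) + bt x d i / 2) = - (real d + 1) / 2 * P d x + P d x / 2"
      unfolding P_bt by (simp add: sum.distrib sum_distrib_left sum_divide_distrib mult.commute)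
    finally have "(real d + 1) * R d x \<ge> - (real d + 1) / 2 * P d x + P d x / 2" using S2 by simp
    then have "(real d + 1) * R d x > (real d + 1) * (- P d x / 2)" using Ppos by (simp add: field_simps)
    moreover have pos: "real d + 1 > 0" by simp
    ultimately show ?thesis using mult_less_cancel_left_pos[OF pos] by blast
  qed
  have up: "R d x < 0"
  proof -
    define j0 where "j0 = (m - 1) div 2"
    have j0m: "j0 \<in> {0..m}" unfolding j0_def by auto
    have m1: "m \<ge> 4" using assms(1) dm by simp
    have nz: "real m - 2 * real j0 \<noteq> 0"
    proof -
      have "m \<noteq> 2 * j0" unfolding j0_def using m1 by presburger
      then have "real m \<noteq> real (2 * j0)" by (metis of_nat_eq_iff)
      then show ?thesis by simp
    qed
    have "ffact x j0 > 0" by (rule ffact_pos) (use assms(2) dm in \<open>simp add: j0_def\<close>)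
    moreover have "ffact x (m - j0) > 0"
    proof (rule ffact_pos)
      have "2 * (m - j0) \<le> m + 2" unfolding j0_def by presburger
      then have "real (2 * (m - j0)) \<le> real (m + 2)" by (simp only: of_nat_le_iff)
      then have "2 * real (m - j0) \<le> real m + 2" by simp
      then show "real (m - j0) < x + 1" using assms(2) dm by simp
    qed
    ultimately have "bt x m j0 > 0" unfolding bt_def by simp
    then have pj0: "bt x m j0 * (real m - 2 * real j0)^2 > 0" using nz by simp
    have "bt x m j0 * (real m - 2 * real j0)^2 \<le> (\<Sum>j=0..m. bt x m j * (real m - 2 * real j)^2)"
      by (rule member_le_sum) (use j0m bt_nonneg in auto)
    then have spos: "(\<Sum>j=0..m. bt x m j * (real m - 2 * real j)^2) > 0" using pj0 by linarith
    have ypos: "2 * x - real m > 0" using assms(2) dm by simp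
    have "(\<Sum>i=0..d. bt x d i * ((2 * real i - real d)^2 - real d)) < 0"
      unfolding dm key_sum using spos ypos by (simp add: mult_neg_pos)
    then have "(\<Sum>i=0..d. bt x d i * (((2 * real i - real d)^2 - real d) / 2)) < 0"
    proof -
      assume a: "(\<Sum>i=0..d. bt x d i * ((2 * real i - real d)^2 - real d)) < 0"
      have "(\<Sum>i=0..d. bt x d i * (((2 * real i - real d)^2 - real d) / 2))
          = (\<Sum>i=0..d. bt x d i * ((2 * real i - real d)^2 - real d)) / 2"
        unfolding sum_divide_distrib by (rule sum.cong) simp_all
      then show ?thesis using a by simp
    qed
    then have "(real d + 1) * R d x < 0" using S2 by simp
    then show ?thesis by (simp add: mult_less_0_iff)
  qed
  show ?thesis using low up Ppos by (simp add: divide_less_0_iff less_divide_eq)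
qed

end
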